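(* Let $X=\{\mathbf{x}_1,\dots,\mathbf{x}_m\}\subset\mathbb{R}^n$ be a finite set of labeled points, with labels $y_i\in\{-1,1\}$, that is linearly separable. Let $(\mathbf{w},b)$ be the solution of the hard-margin SVM problem for $X$, let $\mathcal{P}=\{\mathbf{x}\in\mathbb{R}^n : \mathbf{w}^T\mathbf{x}+b=0\}$ be the separating hyperplane, and let $\rho\colon\mathbb{R}^n\to\mathcal{P}$ be the orthogonal projection onto $\mathcal{P}$. Let $S_+$ (resp. $S_-$) be the set of support vectors with label $+1$ (resp. $-1$). Then $\rho(\mathrm{conv}(S_+))\cap\rho(\mathrm{conv}(S_-))\neq\emptyset$.
   Context: Labeled points $X$ with labels $y_i\in\{-1,1\}$ (both labels occurring) are linearly separable if there is a hyperplane in $\mathbb{R}^n$ with all points labeled $+1$ strictly on one side and all points labeled $-1$ strictly on the other. The hard-margin SVM problem is: minimize $\frac12\|\mathbf{w}\|^2$ over $\mathbf{w}\in\mathbb{R}^n$, $b\in\mathbb{R}$, subject to $y_i(\mathbf{w}^T\mathbf{x}_i+b)\ge 1$ for all $i$. At the optimum, $\min_i|\mathbf{w}^T\mathbf{x}_i+b|=1$, and the support vectors are the points $\mathbf{x}_i$ with $|\mathbf{w}^T\mathbf{x}_i+b|=1$, i.e. $y_i(\mathbf{w}^T\mathbf{x}_i+b)=1$. $\mathrm{conv}(T)$ denotes the convex hull of $T$. *)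

theory Defs
  imports "HOL-Analysis.Analysis"
begin

definition linearly_separable :: "nat \<Rightarrow> (nat \<Rightarrow> 'a::euclidean_space) \<Rightarrow> (nat \<Rightarrow> real) \<Rightarrow> bool" where
  "linearly_separable m x y \<longleftrightarrow>
     (\<forall>i<m. y i \<in> {-1, 1}) \<and> (\<exists>i<m. y i = 1) \<and> (\<exists>i<m. y i = -1) \<and>
     (\<exists>w b. w \<noteq> 0 \<and> (\<forall>i<m. y i = 1 \<longrightarrow> inner w (x i) + b > 0)
                   \<and> (\<forall>i<m. y i = -1 \<longrightarrow> inner w (x i) + b < 0))"

definition svm_feasible :: "nat \<Rightarrow> (nat \<Rightarrow> 'a::euclidean_space) \<Rightarrow> (nat \<Rightarrow> real) \<Rightarrow> 'a \<Rightarrow> real \<Rightarrow> bool" where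
  "svm_feasible m x y w b \<longleftrightarrow> (\<forall>i<m. y i * (inner w (x i) + b) \<ge> 1)"

definition svm_solution :: "nat \<Rightarrow> (nat \<Rightarrow> 'a::euclidean_space) \<Rightarrow> (nat \<Rightarrow> real) \<Rightarrow> 'a \<Rightarrow> real \<Rightarrow> bool" where
  "svm_solution m x y w b \<longleftrightarrow> svm_feasible m x y w b \<and>
     (\<forall>w' b'. svm_feasible m x y w' b' \<longrightarrow> (1/2) * (norm w)^2 \<le> (1/2) * (norm w')^2)"

definition support_vectors :: "nat \<Rightarrow> (nat \<Rightarrow> 'a::euclidean_space) \<Rightarrow> (nat \<Rightarrow> real) \<Rightarrow> 'a \<Rightarrow> real \<Rightarrow> real \<Rightarrow> 'a set" where
  "support_vectors m x y w b l = {x i | i. i < m \<and> y i = l \<and> y i * (inner w (x i) + b) = 1}"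

end

theory Submission
  imports Defs
begin

lemma no_improve:
  fixes x :: "nat \<Rightarrow> 'a::euclidean_space"
  assumes sol: "svm_solution m x y w b" and w0: "w \<noteq> 0" and uw: "inner u w = 0"
    and sep: "\<forall>i<m. y i * (inner w (x i) + b) = 1 \<longrightarrow> y i * (inner u (x i) - c) > 0"
  shows False
proof -
  have feas: "\<forall>i<m. y i * (inner w (x i) + b) \<ge> 1" and opt: "\<And>w' b'. svm_feasible m x y w' b' \<Longrightarrow> (norm w)^2 \<le> (norm w')^2"
    using sol unfolding svm_solution_def svm_feasible_def by auto
  define I where "I = {i. i<m \<and> y i * (inner w (x i) + b) = 1}"
  define d where "d = Min (insert 1 ((\<lambda>i. y i * (inner u (x i) - c)) ` I))"
  have finI: "finite I" unfolding I_def by auto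
  have d0: "d > 0" unfolding d_def using finI sep by (auto simp: I_def)
  have dle: "\<And>i. i \<in> I \<Longrightarrow> d \<le> y i * (inner u (x i) - c)" unfolding d_def using finI by auto
  have eq: "\<And>i e. y i * (inner (w + e *\<^sub>R u) (x i) + (b - e*c)) - (1+e*d) = (y i*(inner w (x i)+b) - 1) + e*(y i*(inner u (x i) - c) - d)"
    by (simp add: algebra_simps inner_add_left)
  have ev1: "\<forall>\<^sub>F e in at_right 0. \<forall>i\<in>{..<m}. y i * (inner (w + e *\<^sub>R u) (x i) + (b - e*c)) \<ge> 1 + e*d"
  proof (rule eventually_ball_finite, simp, intro ballI)
    fix i assume "i \<in> {..<m}"
    hence im: "i < m" by simp
    show "\<forall>\<^sub>F e in at_right 0. y i * (inner (w + e *\<^sub>R u) (x i) + (b - e*c)) \<ge> 1 + e*d"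
    proof (cases "i \<in> I")
      case True
      show ?thesis using eventually_at_right_less[of "0::real"]
      proof eventually_elim
        case (elim e)
        have "e * (y i * (inner u (x i) - c) - d) \<ge> 0" using dle[OF True] elim by simp
        moreover have "y i*(inner w (x i)+b) = 1" using True I_def by auto
        ultimately show ?case using eq[of i e] by linarith
      qed
    next
      case False
      hence gt: "y i*(inner w (x i)+b) - 1 > 0" using feas im I_def by force
      have lim: "((\<lambda>e. (y i*(inner w (x i)+b) - 1) + e*(y i*(inner u (x i) - c) - d)) \<longlongrightarrow> (y i*(inner w (x i)+b) - 1) + 0*(y i*(inner u (x i) - c) - d)) (at_right 0)"
        by (intro tendsto_intros)
      have "\<forall>\<^sub>F e in at_right 0. (y i*(inner w (x i)+b) - 1) + e*(y i*(inner u (x i) - c) - d) > 0"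
        using order_tendstoD(1)[OF lim, of 0] gt by simp
      then show ?thesis
      proof eventually_elim
        case (elim e)
        then show ?case using eq[of i e] by linarith
      qed
    qed
  qed
  have nw: "norm w ^ 2 > 0" using w0 by simp
  have lim2: "((\<lambda>e. 2*d*(norm w)^2 + e*(d^2*(norm w)^2 - (norm u)^2)) \<longlongrightarrow> 2*d*(norm w)^2 + 0*(d^2*(norm w)^2 - (norm u)^2)) (at_right 0)"
    by (intro tendsto_intros)
  have ev2: "\<forall>\<^sub>F e in at_right 0. 2*d*(norm w)^2 + e*(d^2*(norm w)^2 - (norm u)^2) > 0"
    using order_tendstoD(1)[OF lim2, of 0] d0 nw by simp
  have "\<forall>\<^sub>F e in at_right 0. e > 0 \<and> (\<forall>i\<in>{..<m}. y i * (inner (w + e *\<^sub>R u) (x i) + (b - e*c)) \<ge> 1 + e*d)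
      \<and> 2*d*(norm w)^2 + e*(d^2*(norm w)^2 - (norm u)^2) > 0"
    using ev1 ev2 eventually_at_right_less[of "0::real"] by eventually_elim auto
  then obtain e where e0: "e > 0" and ei: "\<forall>i\<in>{..<m}. y i * (inner (w + e *\<^sub>R u) (x i) + (b - e*c)) \<ge> 1 + e*d"
      and eg: "2*d*(norm w)^2 + e*(d^2*(norm w)^2 - (norm u)^2) > 0"
    using eventually_happens'[OF trivial_limit_at_right_real[of "0::real"]] by blast
  define t where "t = 1 + e*d"
  have t0: "t > 0" unfolding t_def using e0 d0 by (simp add: add_pos_pos)
  define w' where "w' = (1/t) *\<^sub>R (w + e *\<^sub>R u)"
  define b' where "b' = (b - e*c)/t"
  have "svm_feasible m x y w' b'"
    unfolding svm_feasible_def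
  proof (intro allI impI)
    fix i assume "i < m"
    hence h: "y i * (inner (w + e *\<^sub>R u) (x i) + (b - e*c)) \<ge> t" using ei t_def by auto
    have "y i * (inner w' (x i) + b') = (y i * (inner (w + e *\<^sub>R u) (x i) + (b - e*c))) / t"
    proof -
      have "inner w' (x i) = inner (w + e *\<^sub>R u) (x i) / t" unfolding w'_def by simp
      then show ?thesis unfolding b'_def using t0 by (simp add: add_divide_distrib[symmetric])
    qed
    then show "y i * (inner w' (x i) + b') \<ge> 1" using h t0 by simp
  qed
  hence le: "(norm w)^2 \<le> (norm w')^2" by (rule opt)
  have nwu: "(norm (w + e *\<^sub>R u))^2 = (norm w)^2 + e^2 * (norm u)^2"
  proof -
    have "(norm (w + e *\<^sub>R u))^2 = inner (w + e *\<^sub>R u) (w + e *\<^sub>R u)" by (rule power2_norm_eq_inner)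
    also have "\<dots> = inner w w + e * inner u w + e * inner w u + e*e*inner u u"
      by (simp add: inner_add_left inner_add_right algebra_simps)
    also have "\<dots> = (norm w)^2 + e^2 * (norm u)^2"
      using uw by (simp add: inner_commute[of w u] dot_square_norm power2_eq_square[of e])
    finally show ?thesis .
  qed
  have "(norm w')^2 = (norm (w + e *\<^sub>R u))^2 / t^2"
    unfolding w'_def using t0 by (simp add: power_divide)
  also have "\<dots> < (norm w)^2"
  proof -
    have "(norm w)^2 * t^2 - (norm (w + e *\<^sub>R u))^2 = e * (2*d*(norm w)^2 + e*(d^2*(norm w)^2 - (norm u)^2))"
      unfolding nwu t_def by (simp add: algebra_simps power2_eq_square)
    also have "\<dots> > 0" using e0 eg by simp
    finally have "(norm (w + e *\<^sub>R u))^2 < (norm w)^2 * t^2" by simp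
    then show ?thesis using t0 by (simp add: divide_less_eq)
  qed
  finally show False using le by simp
qed


lemma closest_hyp:
  fixes w :: "'a::euclidean_space"
  assumes w0: "w \<noteq> 0"
  shows "closest_point {z. inner w z + b = 0} a = a - ((inner w a + b) / inner w w) *\<^sub>R w"
proof -
  define r where "r = a - ((inner w a + b) / inner w w) *\<^sub>R w"
  have ww: "inner w w \<noteq> 0" using w0 by simp
  have H: "{z. inner w z + b = 0} = {z. inner w z = - b}" by (auto simp: algebra_simps)
  have rin: "inner w r + b = 0" unfolding r_def using ww by (simp add: inner_diff_right)
  have "r = closest_point {z. inner w z + b = 0} a"
  proof (rule closest_point_unique)
    show "convex {z. inner w z + b = 0}" unfolding H by (rule convex_hyperplane)
    show "closed {z. inner w z + b = 0}" unfolding H by (rule closed_hyperplane)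
    show "r \<in> {z. inner w z + b = 0}" using rin by simp
    show "\<forall>z\<in>{z. inner w z + b = 0}. dist a r \<le> dist a z"
    proof
      fix z assume "z \<in> {z. inner w z + b = 0}"
      hence z: "inner w z + b = 0" by simp
      have orth: "inner (a - r) (r - z) = 0"
      proof -
        have ar: "a - r = ((inner w a + b) / inner w w) *\<^sub>R w" unfolding r_def by simp
        have wz: "inner w (r - z) = 0" using z rin by (simp add: inner_diff_right)
        show ?thesis unfolding ar inner_scaleR_left wz by (rule mult_zero_right)
      qed
      have "(dist a z)^2 = (norm ((a - r) + (r - z)))^2" by (simp add: dist_norm)
      also have "\<dots> = inner (a-r) (a-r) + inner (a-r) (r-z) + (inner (r-z) (a-r) + inner (r-z) (r-z))"
        by (simp only: power2_norm_eq_inner inner_add_left inner_add_right)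
      also have "\<dots> = (norm (a - r))^2 + (norm (r - z))^2"
      proof -
        have o2: "inner (r-z) (a-r) = 0" using orth by (metis inner_commute)
        have n1: "inner (a-r) (a-r) = (norm (a - r))^2" by (rule power2_norm_eq_inner[symmetric])
        have n2: "inner (r-z) (r-z) = (norm (r - z))^2" by (rule power2_norm_eq_inner[symmetric])
        show ?thesis using orth o2 n1 n2 by linarith
      qed
      finally have eqd: "(dist a z)^2 = (norm (a - r))^2 + (norm (r - z))^2" .
      have dr: "dist a r = norm (a - r)" by (rule dist_norm)
      have "(dist a r)^2 \<le> (dist a z)^2" unfolding dr using eqd zero_le_power2[of "norm (r - z)"] by linarith
      then show "dist a r \<le> dist a z" by (rule power2_le_imp_le[OF _ zero_le_dist])
    qed
  qed
  then show ?thesis unfolding r_def by simp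
qed

theorem lemma4p1:
  fixes x :: "nat \<Rightarrow> 'a::euclidean_space" and y :: "nat \<Rightarrow> real" and m :: nat
    and w :: 'a and b :: real
  assumes "linearly_separable m x y"
    and "svm_solution m x y w b"
  shows "closest_point {z. inner w z + b = 0} ` (convex hull (support_vectors m x y w b 1))
       \<inter> closest_point {z. inner w z + b = 0} ` (convex hull (support_vectors m x y w b (-1))) \<noteq> {}"
proof
  assume disj: "closest_point {z. inner w z + b = 0} ` (convex hull (support_vectors m x y w b 1))
       \<inter> closest_point {z. inner w z + b = 0} ` (convex hull (support_vectors m x y w b (-1))) = {}"
  have lab: "\<forall>i<m. y i \<in> {-1, 1}" and ex1: "\<exists>i<m. y i = 1" and exm: "\<exists>i<m. y i = -1"
    using assms(1) unfolding linearly_separable_def by auto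
  have feas: "\<forall>i<m. y i * (inner w (x i) + b) \<ge> 1"
    using assms(2) unfolding svm_solution_def svm_feasible_def by auto
  have w0: "w \<noteq> 0"
  proof
    assume "w = 0"
    obtain i j where ij: "i < m" "j < m" "y i = 1" "y j = -1" using ex1 exm by blast
    have "b \<ge> 1" using feas[rule_format, OF ij(1)] ij(3) \<open>w = 0\<close> by simp
    moreover have "- b \<ge> 1" using feas[rule_format, OF ij(2)] ij(4) \<open>w = 0\<close> by simp
    ultimately have "b \<ge> 1" "- b \<ge> 1" by auto
    then show False by simp
  qed
  define Sp where "Sp = support_vectors m x y w b 1"
  define Sm where "Sm = support_vectors m x y w b (-1)"
  define \<rho> where "\<rho> = (\<lambda>z. z - ((inner w z + b) / inner w w) *\<^sub>R w)"
  have cp: "closest_point {z. inner w z + b = 0} = \<rho>"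
    unfolding \<rho>_def by (rule ext) (rule closest_hyp[OF w0])
  have ww: "inner w w \<noteq> 0" using w0 by simp
  have supp: "\<And>i. i < m \<Longrightarrow> y i * (inner w (x i) + b) = 1 \<Longrightarrow> (y i = 1 \<and> x i \<in> Sp) \<or> (y i = -1 \<and> x i \<in> Sm)"
    using lab unfolding Sp_def Sm_def support_vectors_def by auto
  have finSp: "finite Sp" unfolding Sp_def support_vectors_def
    by (rule finite_subset[of _ "x ` {..<m}"]) auto
  have finSm: "finite Sm" unfolding Sm_def support_vectors_def
    by (rule finite_subset[of _ "x ` {..<m}"]) auto
  show False
  proof (cases "Sp = {}")
    case True
    show False
    proof (rule no_improve[OF assms(2) w0, of 0 1])
      show "inner 0 w = 0" by simp
      show "\<forall>i<m. y i * (inner w (x i) + b) = 1 \<longrightarrow> y i * (inner 0 (x i) - 1) > 0"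
      proof (intro allI impI)
        fix i assume "i < m" "y i * (inner w (x i) + b) = 1"
        then have "y i = -1" using supp True by blast
        then show "y i * (inner 0 (x i) - 1) > 0" by simp
      qed
    qed
  next
    case spne: False
    show False
    proof (cases "Sm = {}")
      case True
      show False
      proof (rule no_improve[OF assms(2) w0, of 0 "-1"])
        show "inner 0 w = 0" by simp
        show "\<forall>i<m. y i * (inner w (x i) + b) = 1 \<longrightarrow> y i * (inner 0 (x i) - -1) > 0"
        proof (intro allI impI)
          fix i assume "i < m" "y i * (inner w (x i) + b) = 1"
          then have "y i = 1" using supp True by blast
          then show "y i * (inner 0 (x i) - -1) > 0" by simp
        qed
      qed
    next
      case smne: False
      define L where "L = (\<lambda>z. z - ((inner w z) / inner w w) *\<^sub>R w)"
      define k where "k = - (b / inner w w) *\<^sub>R w"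
      have rhoL: "\<rho> = (\<lambda>z. k + L z)"
        unfolding \<rho>_def L_def k_def by (auto simp: add_divide_distrib scaleR_add_left)
      have linL: "linear L"
        by (rule linearI) (simp_all add: L_def inner_add_right add_divide_distrib scaleR_add_left scaleR_diff_right)
      have img: "\<rho> ` C = (+) k ` (L ` C)" for C unfolding rhoL by auto
      have contr: "continuous_on UNIV \<rho>" unfolding \<rho>_def using ww by (intro continuous_intros) auto
      define A where "A = \<rho> ` (convex hull Sp)"
      define B where "B = \<rho> ` (convex hull Sm)"
      have cvx: "convex (\<rho> ` (convex hull C))" for C
        unfolding img by (intro convex_translation convex_linear_image[OF linL] convex_convex_hull)
      have cpt: "finite C \<Longrightarrow> compact (\<rho> ` (convex hull C))" for C
        by (intro compact_continuous_image continuous_on_subset[OF contr] finite_imp_compact_convex_hull) auto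
      have cA: "convex A" "compact A" "A \<noteq> {}"
        unfolding A_def using spne cvx cpt[OF finSp] by auto
      have cB: "convex B" "compact B"
        unfolding B_def using cvx cpt[OF finSm] by auto
      have AB: "B \<inter> A = {}" using disj unfolding A_def B_def cp Sp_def Sm_def by blast
      obtain a c where ha: "\<forall>z\<in>B. inner a z < c" and hb: "\<forall>z\<in>A. inner a z > c"
        using separating_hyperplane_closed_compact[OF cB(1) compact_imp_closed[OF cB(2)] cA(1,2,3) AB] by blast
      define u where "u = a - (inner a w / inner w w) *\<^sub>R w"
      define c' where "c' = c + b * inner a w / inner w w"
      have uw: "inner u w = 0" unfolding u_def using ww by (simp add: inner_diff_left)
      have arho: "inner a (\<rho> z) = inner u z - b * inner a w / inner w w" for z
        unfolding \<rho>_def u_def using ww by (simp add: inner_diff_left inner_diff_right field_simps)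
      show False
      proof (rule no_improve[OF assms(2) w0 uw, of c'])
        show "\<forall>i<m. y i * (inner w (x i) + b) = 1 \<longrightarrow> y i * (inner u (x i) - c') > 0"
        proof (intro allI impI)
          fix i assume im: "i < m" and s: "y i * (inner w (x i) + b) = 1"
          from supp[OF im s] show "y i * (inner u (x i) - c') > 0"
          proof
            assume h: "y i = 1 \<and> x i \<in> Sp"
            hence "\<rho> (x i) \<in> A" unfolding A_def by (auto intro: hull_inc)
            hence "inner a (\<rho> (x i)) > c" using hb by blast
            then show ?thesis using h unfolding arho c'_def by simp
          next
            assume h: "y i = -1 \<and> x i \<in> Sm"
            hence "\<rho> (x i) \<in> B" unfolding B_def by (auto intro: hull_inc)
            hence "inner a (\<rho> (x i)) < c" using ha by blast
            then show ?thesis using h unfolding arho c'_def by simp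
          qed
        qed
      qed
    qed
  qed
qed

end
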